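(* Let $D=pq$ with $p\neq q$ odd primes, let $r$ be a positive integer with $2rD$ square-free, and let $d$ be a (possibly negative) integer with $d\mid rD$. Let $C'_d$ be the curve $W^2=d-\frac{2rD}{d}Z^4$. Then: (1) $C'_d(\mathbb{Q}_2)\neq\emptyset$ if and only if $d-2rD/d\equiv1\pmod 8$ or $d\equiv1\pmod 8$; (2) for any prime $t\mid\frac{rD}{d}$, $C'_d(\mathbb{Q}_t)\neq\emptyset$ if and only if $\left(\frac{d}{t}\right)=1$; (3) for any prime $l\mid d$, $C'_d(\mathbb{Q}_l)\neq\emptyset$ if and only if $\left(\frac{-2rD/d}{l}\right)=1$.
   Context: $\left(\frac{\cdot}{\cdot}\right)$ denotes the Legendre symbol; $C'_d(\mathbb{Q}_v)$ denotes the set of $\mathbb{Q}_v$-points $(Z,W)$ of the affine curve. *)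

theory Defs
  imports "HOL-Number_Theory.Number_Theory" "HOL-Computational_Algebra.Squarefree"
begin

text \<open>p-adic integers Z_v are modelled as the inverse limit of the rings Z/v^n Z:
  a sequence x :: nat => int with x (n+1) congruent to x n modulo v^n.
  An identity between integer polynomial expressions in such elements holds in Z_v
  iff it holds modulo v^n at level n for every n.\<close>

definition padic_seq :: "int \<Rightarrow> (nat \<Rightarrow> int) \<Rightarrow> bool" where
  "padic_seq v x \<longleftrightarrow> (\<forall>n. [x (Suc n) = x n] (mod v ^ n))"

text \<open>Q_v-points (Z,W) of the affine curve W^2 = A + B Z^4.  Every element of Q_v
  has the form u / v^k with u in Z_v; writing W = w / v^a and Z = z / v^b and clearing
  denominators (Z_v is a domain) the equation W^2 = A + B Z^4 becomes
  v^(4b) w^2 = v^(2a) (A v^(4b) + B z^4) in Z_v.\<close>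

definition has_Qv_point :: "int \<Rightarrow> int \<Rightarrow> int \<Rightarrow> bool" where
  "has_Qv_point v A B \<longleftrightarrow>
     (\<exists>(a::nat) (b::nat) w z. padic_seq v w \<and> padic_seq v z \<and>
        (\<forall>n. [v ^ (4*b) * (w n)^2 = v ^ (2*a) * (A * v ^ (4*b) + B * (z n)^4)] (mod v ^ n)))"

end

theory Submission
  imports Defs
begin

lemma seq_exists:
  fixes v :: int
  assumes P0: "P 0 y0" and step: "\<And>n y. P n y \<Longrightarrow> \<exists>y'. P (Suc n) y' \<and> [y' = y] (mod v^n)"
  shows "\<exists>x. padic_seq v x \<and> (\<forall>n. P n (x n))"
proof -
  define x where "x = rec_nat y0 (\<lambda>n y. SOME y'. P (Suc n) y' \<and> [y' = y] (mod v^n))"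
  have x0: "x 0 = y0" and xS: "\<And>n. x (Suc n) = (SOME y'. P (Suc n) y' \<and> [y' = x n] (mod v^n))"
    by (simp_all add: x_def)
  have *: "P n (x n) \<and> (P n (x n) \<longrightarrow> P (Suc n) (x (Suc n)) \<and> [x (Suc n) = x n] (mod v^n))" for n
  proof (induction n)
    case 0
    show ?case using P0 x0 someI_ex[OF step[OF P0]] xS[of 0] by simp
  next
    case (Suc n)
    then have "P (Suc n) (x (Suc n))" by blast
    then show ?case using someI_ex[OF step[of "Suc n"]] xS[of "Suc n"] by simp
  qed
  show ?thesis unfolding padic_seq_def using * by blast
qed

lemma sqrt_odd:
  fixes t c y0 :: int
  assumes t: "prime t" "odd t" and c: "\<not> t dvd c" and y0: "[y0^2 = c] (mod t)"
  shows "\<exists>w. padic_seq t w \<and> (\<forall>n. [w n ^ 2 = c] (mod t^n))"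
proof -
  have step: "\<exists>y'. [y'^2 = c] (mod t^(Suc n + 1)) \<and> [y' = y] (mod t^n)"
    if h: "[y^2 = c] (mod t^(n+1))" for n y
  proof -
    have "[y^2 = c] (mod t)" using h cong_dvd_modulus by (metis dvd_power le_add2 add_gr_0 zero_less_one)
    hence ty: "\<not> t dvd y" using c t
      by (metis cong_dvd_iff dvd_mult power2_eq_square)
    obtain g where g: "c - y^2 = t^(n+1) * g" using h
      by (metis cong_iff_dvd_diff cong_sym dvdE)
    have t2: "\<not> t dvd 2"
    proof
      assume "t dvd 2"
      moreover have "t \<ge> 2" using t prime_ge_2_int by blast
      ultimately have "t = 2" using zdvd_imp_le by fastforce
      thus False using t by simp
    qed
    have "\<not> t dvd 2*y" using t ty t2 prime_dvd_mult_iff by blast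
    hence "coprime (2*y) t" using t prime_imp_coprime coprime_commute by blast
    then obtain i where i: "[(2*y) * i = 1] (mod t)" using cong_solve_coprime_int by blast
    define s where "s = i * g"
    have "[(2*y)*s = g] (mod t)" unfolding s_def using cong_scalar_right[OF i, of g] by (simp add: ac_simps)
    then obtain h2 where h2: "2*y*s - g = t*h2" by (metis cong_iff_dvd_diff dvdE)
    define y' where "y' = y + s * t^(n+1)"
    define T where "T = t^(n+1)"
    have e1: "y'^2 - c = T*(t*h2) + s^2*T^2"
    proof -
      have "y'^2 - c = (2*y*s - g)*T + s^2*T^2" unfolding y'_def T_def[symmetric] using g T_def
        by (simp add: power2_eq_square algebra_simps)
      thus ?thesis using h2 by (simp add: algebra_simps)
    qed
    have "T*t = t^(n+2)" "T^2 = t^(2*n+2)" unfolding T_def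
      by (simp, metis power_mult mult.commute mult_2 add.commute mult_Suc Suc_eq_plus1 add_Suc_right)
    hence "y'^2 - c = t^(n+2) * h2 + s^2 * t^(2*n+2)" using e1 by (metis mult.assoc)
    moreover have "t^(n+2) dvd s^2 * t^(2*n+2)" by (simp add: le_imp_power_dvd)
    ultimately have "t^(n+2) dvd y'^2 - c" by simp
    hence "[y'^2 = c] (mod t^(Suc n + 1))" by (simp add: cong_iff_dvd_diff)
    moreover have "[y' = y] (mod t^n)" unfolding y'_def cong_iff_dvd_diff
      by (simp add: le_imp_power_dvd)
    ultimately show ?thesis by blast
  qed
  obtain w where w: "padic_seq t w" "\<forall>n. [w n ^ 2 = c] (mod t^(n+1))"
    using seq_exists[of "\<lambda>n y. [y^2 = c] (mod t^(n+1))" y0 t] y0 step by auto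
  have "[w n ^ 2 = c] (mod t^n)" for n using w(2) cong_dvd_modulus
    by (metis le_add1 le_imp_power_dvd)
  thus ?thesis using w(1) by blast
qed

lemma sqrt_two:
  fixes c :: int
  assumes c: "[c = 1] (mod 8)"
  shows "\<exists>w. padic_seq 2 w \<and> (\<forall>n. [w n ^ 2 = c] (mod 2^n))"
proof -
  have step: "\<exists>y'. (odd y' \<and> [y'^2 = c] (mod 2^(Suc n + 3))) \<and> [y' = y] (mod 2^n)"
    if h: "odd y \<and> [y^2 = c] (mod 2^(n+3))" for n y
  proof -
    have "2^(n+3) dvd c - y^2" using h cong_sym cong_iff_dvd_diff by blast
    then obtain g where g: "c - y^2 = 2^(n+3) * g" by (rule dvdE)
    show ?thesis
    proof (cases "even g")
      case True
      then obtain g' where g': "g = 2*g'" by (rule evenE)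
      have "(2::int)^(Suc n + 3) = 16 * 2^n" "(2::int)^(n+3) = 8 * 2^n" by (simp_all add: power_add)
      hence "c - y^2 = 2^(Suc n + 3) * g'" using g g' by simp
      hence "[c = y^2] (mod 2^(Suc n + 3))" unfolding cong_iff_dvd_diff by simp
      hence "[y^2 = c] (mod 2^(Suc n + 3))" by (rule cong_sym)
      thus ?thesis using h by (intro exI[of _ y]) simp
    next
      case False
      define M :: int where "M = 2^n"
      define y' where "y' = y + 4*M"
      have "y'^2 - c = y^2 - c + 8*M*y + 16*M*M" unfolding y'_def by (simp add: power2_eq_square algebra_simps)
      also have "y^2 - c = - (8*M*g)" using g unfolding M_def by (simp add: power_add)
      finally have e: "y'^2 - c = 8*M*(y-g) + 16*M*M" by (simp add: algebra_simps)
      have "even (y - g)" using False h by simp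
      then obtain k where k: "y - g = 2*k" by (rule evenE)
      have "y'^2 - c = (16*M) * (k + M)" using e k by (simp add: algebra_simps)
      moreover have "16*M = 2^(Suc n + 3)" unfolding M_def by (simp add: power_add)
      ultimately have "[y'^2 = c] (mod 2^(Suc n + 3))" unfolding cong_iff_dvd_diff by simp
      moreover have "[y' = y] (mod 2^n)" unfolding y'_def cong_iff_dvd_diff M_def by simp
      moreover have "odd y'" using h unfolding y'_def by simp
      ultimately show ?thesis by blast
    qed
  qed
  have c1: "odd (1::int) \<and> [1^2 = c] (mod 2^(0+3))" using c by (simp add: cong_sym)
  have "\<exists>x. padic_seq 2 x \<and> (\<forall>n. odd (x n) \<and> [x n ^ 2 = c] (mod 2^(n+3)))"
    by (rule seq_exists[where P="\<lambda>n y. odd y \<and> [y^2 = c] (mod 2^(n+3))", OF c1 step])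
  then obtain w where w: "padic_seq 2 w" "\<forall>n. odd (w n) \<and> [w n ^ 2 = c] (mod 2^(n+3))" by blast
  have "[w n ^ 2 = c] (mod 2^n)" for n
    using cong_dvd_modulus[OF w(2)[rule_format, THEN conjunct2] le_imp_power_dvd[of n "n+3"]] by simp
  thus ?thesis using w(1) by blast
qed

lemma key:
  fixes t u W :: int
  assumes t: "prime t" and u: "\<not> t dvd u" and m: "m < N"
    and h: "[t^(2*j) * W^2 = t^m * u] (mod t^N)"
  shows "even m \<and> (\<exists>W'. [W'^2 = u] (mod t^(N-m)))"
proof -
  define X where "X = t^(2*j) * W^2"
  have t0: "t \<noteq> 0" "\<not> is_unit t" using t by auto
  have hm: "[X = t^m*u] (mod t^(Suc m))"
    using cong_dvd_modulus[OF h[folded X_def] le_imp_power_dvd[of "Suc m" N t]] m by simp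
  have hm0: "[X = t^m*u] (mod t^m)"
    by (rule cong_dvd_modulus[OF hm]) (simp add: le_imp_power_dvd)
  have d1: "t^m dvd X" using cong_dvd_iff[OF hm0] by simp
  have d2: "\<not> t^(Suc m) dvd X"
  proof
    assume "t^(Suc m) dvd X"
    hence "t^m * t dvd t^m*u" using cong_dvd_iff[OF hm] by (simp add: power_Suc2)
    hence "t dvd u" using t0 by (subst (asm) dvd_times_left_cancel_iff) simp_all
    thus False using u by simp
  qed
  have Xm: "multiplicity t X = m" using multiplicity_eqI[OF d1 d2] .
  have "X \<noteq> 0" using d2 by auto
  hence W0: "W \<noteq> 0" unfolding X_def by auto
  have pe: "prime_elem t" using t by (rule prime_imp_prime_elem)
  have "multiplicity t X = multiplicity t (t^(2*j)) + multiplicity t (W^2)" unfolding X_def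
    using W0 t0 by (intro prime_elem_multiplicity_mult_distrib[OF pe]) auto
  also have "multiplicity t (W^2) = 2 * multiplicity t W"
    using prime_elem_multiplicity_power_distrib[OF pe W0] .
  also have "multiplicity t (t^(2*j)) = 2*j" using multiplicity_same_power[OF t0] .
  finally have "multiplicity t X = 2*j + 2 * multiplicity t W" .
  hence mm: "m = 2*j + 2 * multiplicity t W" using Xm by simp
  obtain W' where W': "W = t^multiplicity t W * W'" "\<not> t dvd W'"
    using multiplicity_decompose'[of W t] W0 t0 by blast
  define k where "k = multiplicity t W"
  have W2: "W^2 = t^(2*k) * W'^2" unfolding k_def
    by (subst W'(1)) (simp add: power_mult_distrib power_mult[symmetric] mult.commute)
  have tt: "t^(2*j) * t^(2*k) = t^m" unfolding mm k_def by (simp add: power_add)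
  have e: "t^(2*j) * W^2 = t^m * W'^2" unfolding W2 tt[symmetric] by (simp add: mult.assoc)
  have tN: "t^N = t^m * t^(N-m)" using m by (simp add: power_add[symmetric])
  have "[t^m * W'^2 = t^m * u] (mod t^m * t^(N-m))" using h unfolding e tN .
  hence "t^m * t^(N-m) dvd t^m * (W'^2 - u)" by (simp add: cong_iff_dvd_diff right_diff_distrib)
  hence "t^(N-m) dvd W'^2 - u" using t0 by (subst (asm) dvd_times_left_cancel_iff) simp_all
  hence "[W'^2 = u] (mod t^(N-m))" by (simp add: cong_iff_dvd_diff)
  thus ?thesis using mm by auto
qed

lemma decompZ:
  fixes t Z :: int
  assumes t: "prime t"
  shows "t^b dvd Z \<or> (\<exists>k Z'. k < b \<and> Z = t^k * Z' \<and> \<not> t dvd Z')"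
proof (cases "Z = 0")
  case False
  obtain Z' where Z': "Z = t^multiplicity t Z * Z'" "\<not> t dvd Z'"
  proof -
    have "\<not> is_unit t" using t by auto
    thus ?thesis using multiplicity_decompose'[of Z t] False that by blast
  qed
  show ?thesis
  proof (cases "multiplicity t Z < b")
    case True thus ?thesis using Z' by blast
  next
    case False
    hence "t^b dvd Z" by (simp add: multiplicity_dvd')
    thus ?thesis by blast
  qed
qed simp

lemma unpack:
  assumes "has_Qv_point v A B"
  shows "\<exists>a b. \<forall>N. \<exists>W Z. [v^(4*b) * W^2 = v^(2*a) * (A * v^(4*b) + B * Z^4)] (mod v^N)"
  using assms unfolding has_Qv_point_def by blast

lemma pack:
  assumes "padic_seq v w" "\<forall>n. [w n ^ 2 = A + B * Z0^4] (mod v^n)"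
  shows "has_Qv_point v A B"
proof -
  have "padic_seq v (\<lambda>_. Z0)" unfolding padic_seq_def by simp
  thus ?thesis unfolding has_Qv_point_def using assms
    by (intro exI[of _ 0] exI[of _ 0] exI[of _ w] exI[of _ "\<lambda>_. Z0"]) simp
qed

lemma pow4: "((x::int)^b)^4 = x^(4*b)"
  by (simp add: power_mult[symmetric] mult.commute)

lemma caseA:
  fixes t W Z' A B :: int
  assumes "[t^(4*b) * W^2 = t^(2*a) * (A * t^(4*b) + B * (t^b*Z')^4)] (mod t^N)"
  shows "[t^(2*(2*b)) * W^2 = t^(2*a+4*b) * (A + B*Z'^4)] (mod t^N)"
proof -
  define T where "T = t^(4*b)"
  have "t^(2*a) * (A * t^(4*b) + B * (t^b*Z')^4) = t^(2*a) * (A * T + B * (T*Z'^4))"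
    unfolding T_def power_mult_distrib pow4 ..
  also have "\<dots> = (t^(2*a) * T) * (A + B*Z'^4)" by (simp only: algebra_simps)
  also have "t^(2*a) * T = t^(2*a+4*b)" unfolding T_def by (simp only: power_add)
  finally have e: "t^(2*a) * (A * t^(4*b) + B * (t^b*Z')^4) = t^(2*a+4*b) * (A + B*Z'^4)" .
  have h2: "(2*(2*b)) = 4*b" by simp
  show ?thesis using assms(1) by (simp only: h2 e)
qed

lemma caseB:
  fixes t W Z' A B :: int
  assumes "[t^(4*b) * W^2 = t^(2*a) * (A * t^(4*b) + B * (t^k*Z')^4)] (mod t^N)"
    and "b = k + Suc s"
  shows "[t^(2*(2*b)) * W^2 = t^(2*a+4*k) * (A * t^(4*Suc s) + B*Z'^4)] (mod t^N)"
proof -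
  define T where "T = t^(4*k)"
  define S where "S = t^(4*Suc s)"
  have tb: "t^(4*b) = T * S" unfolding T_def S_def assms(2) by (simp only: add_mult_distrib2 power_add)
  have "t^(2*a) * (A * t^(4*b) + B * (t^k*Z')^4) = t^(2*a) * (A * (T*S) + B * (T*Z'^4))"
    unfolding T_def tb power_mult_distrib pow4 ..
  also have "\<dots> = (t^(2*a) * T) * (A * S + B*Z'^4)" by (simp only: algebra_simps)
  also have "t^(2*a) * T = t^(2*a+4*k)" unfolding T_def by (simp only: power_add)
  finally have e: "t^(2*a) * (A * t^(4*b) + B * (t^k*Z')^4) = t^(2*a+4*k) * (A * t^(4*Suc s) + B*Z'^4)"
    unfolding S_def .
  have h2: "(2*(2*b)) = 4*b" by simp
  show ?thesis using assms(1) by (simp only: h2 e)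
qed

lemma qr_lemma:
  fixes l W Z c :: int
  assumes l: "prime l" and Z: "\<not> l dvd Z" and h: "[W^2 = c*Z^4] (mod l)"
  shows "QuadRes l c"
proof -
  have "\<not> l dvd Z^2" using l Z prime_dvd_power_iff by (metis prime_dvd_mult_iff power2_eq_square)
  hence "coprime (Z^2) l" using l prime_imp_coprime coprime_commute by blast
  then obtain i where i: "[Z^2 * i = 1] (mod l)" using cong_solve_coprime_int by blast
  have "[(W*i)^2 = (c*Z^4)*i^2] (mod l)" using cong_mult[OF h cong_refl[of "i^2"]] by (simp add: power_mult_distrib)
  moreover have "(c*Z^4)*i^2 = c*(Z^2*i)^2" by (simp add: power_mult_distrib power_mult[symmetric] ac_simps)
  moreover have "[c*(Z^2*i)^2 = c*1^2] (mod l)" using cong_mult[OF cong_refl[of c] cong_pow[OF i, of 2]] .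
  ultimately have "[(W*i)^2 = c] (mod l)" by (metis cong_trans mult_1_right power_one)
  thus ?thesis unfolding QuadRes_def by blast
qed

lemma odd_sq8:
  fixes x :: int
  assumes "odd x"
  shows "[x^2 = 1] (mod 8)"
proof -
  have "x mod 8 = 1 \<or> x mod 8 = 3 \<or> x mod 8 = 5 \<or> x mod 8 = 7" using assms by presburger
  moreover have "x^2 mod 8 = (x mod 8)^2 mod 8" by (simp add: power_mod)
  ultimately show ?thesis unfolding cong_def by auto
qed

lemma odd_four8:
  fixes x :: int
  assumes "odd x"
  shows "[x^4 = 1] (mod 8)"
proof -
  have "odd (x^2)" using assms by simp
  hence "[(x^2)^2 = 1] (mod 8)" by (rule odd_sq8)
  thus ?thesis by (simp add: power_mult[symmetric])
qed

lemma not_dvd2: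
  assumes t: "prime (t::int)" "odd t" shows "\<not> t dvd 2"
proof
  assume h: "t dvd 2"
  have "t \<ge> 2" using t(1) by (rule prime_ge_2_int)
  hence "t \<le> 2" using h zdvd_imp_le[of t 2] by simp
  hence "t = 2" using \<open>t \<ge> 2\<close> by simp
  thus False using t by simp
qed


lemma to_modt: "[x = y] (mod (t::int)^M) \<Longrightarrow> 0 < M \<Longrightarrow> [x = y] (mod t)"
proof -
  assume h: "[x = y] (mod (t::int)^M)" and M: "0 < M"
  have "t dvd t^M" using M by (simp add: dvd_power)
  thus "[x = y] (mod t)" using cong_dvd_modulus[OF h] by blast
qed

lemma not_dvd_lin:
  fixes t X B Z :: int
  assumes "prime t" "\<not> t dvd B" "\<not> t dvd Z"
  shows "\<not> t dvd (t*X - B*Z^4)"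
proof
  assume h: "t dvd (t*X - B*Z^4)"
  have h1: "t dvd t*X" by simp
  have "t dvd t*X - (t*X - B*Z^4)" using dvd_diff[OF h1 h] .
  hence "t dvd B*Z^4" by simp
  thus False using assms by (simp add: prime_dvd_mult_iff prime_dvd_power_iff)
qed

lemma rhs_shift:
  fixes t d B' Z :: int
  shows "t^(2*a+4*k) * (d*t^(4*Suc s) + -(t*B')*Z^4) = t^(2*a+4*k+1) * (t*(d*t^(4*s+2)) - B'*Z^4)"
proof -
  have "4*Suc s = Suc (Suc (4*s+2))" by simp
  hence "t^(4*Suc s) = t*(t*t^(4*s+2))" by (simp only: power_Suc)
  moreover have "t^(2*a+4*k+1) = t^(2*a+4*k)*t" by simp
  ultimately show ?thesis by (simp add: algebra_simps)
qed

lemma part2: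
  fixes t d f f' :: int
  assumes t: "prime t" "odd t" and ff: "f = t*f'" and tf': "\<not> t dvd f'" and td: "\<not> t dvd d"
  shows "has_Qv_point t d (-(2*f)) \<longleftrightarrow> Legendre d t = 1"
proof
  assume hp: "has_Qv_point t d (-(2*f))"
  obtain a b where H: "\<And>N. \<exists>W Z. [t^(4*b) * W^2 = t^(2*a) * (d * t^(4*b) + -(2*f) * Z^4)] (mod t^N)"
    using unpack[OF hp] by blast
  define N where "N = 2*a+4*b+10"
  obtain W Z where WZ: "[t^(4*b) * W^2 = t^(2*a) * (d * t^(4*b) + -(2*f) * Z^4)] (mod t^N)"
    using H by blast
  have t2: "\<not> t dvd 2" using not_dvd2 t by blast
  have qr: "QuadRes t d"
  proof (cases "t^b dvd Z")
    case True
    then obtain Z' where Z': "Z = t^b * Z'" by (rule dvdE)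
    have h1: "[t^(2*(2*b)) * W^2 = t^(2*a+4*b) * (d + -(2*f)*Z'^4)] (mod t^N)"
      by (rule caseA) (use WZ Z' in simp)
    have u: "\<not> t dvd (d + -(2*f)*Z'^4)"
    proof
      assume "t dvd (d + -(2*f)*Z'^4)"
      moreover have "t dvd (2*f)*Z'^4" unfolding ff by simp
      ultimately have "t dvd d" using dvd_add[of t "d + -(2*f)*Z'^4" "(2*f)*Z'^4"] by simp
      thus False using td by simp
    qed
    obtain W' where W': "[W'^2 = d + -(2*f)*Z'^4] (mod t^(N - (2*a+4*b)))"
      using key[OF t(1) u _ h1] unfolding N_def by auto
    have "[W'^2 = d + -(2*f)*Z'^4] (mod t)" using to_modt[OF W'] unfolding N_def by simp
    moreover have "[d + -(2*f)*Z'^4 = d] (mod t)" unfolding cong_iff_dvd_diff ff by simp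
    ultimately have "[W'^2 = d] (mod t)" by (rule cong_trans)
    thus ?thesis unfolding QuadRes_def by blast
  next
    case False
    then obtain k Z' where k: "k < b" "Z = t^k * Z'" "\<not> t dvd Z'" using decompZ[OF t(1), of b Z] by blast
    obtain s where s: "b = k + Suc s" using less_imp_Suc_add[OF k(1)] by auto
    have h1: "[t^(2*(2*b)) * W^2 = t^(2*a+4*k) * (d * t^(4*Suc s) + -(t*(2*f'))*Z'^4)] (mod t^N)"
      using caseB[of t b W a d "-(2*f)" k Z' N s] WZ k s ff by (simp add: ac_simps)
    hence h2: "[t^(2*(2*b)) * W^2 = t^(2*a+4*k+1) * (t*(d*t^(4*s+2)) - (2*f')*Z'^4)] (mod t^N)"
      by (simp only: rhs_shift)
    have u: "\<not> t dvd (t*(d*t^(4*s+2)) - (2*f')*Z'^4)"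
      by (rule not_dvd_lin[OF t(1) _ k(3)]) (use t t2 tf' in \<open>simp add: prime_dvd_mult_iff\<close>)
    have "even (2*a+4*k+1)" using key[OF t(1) u _ h2] k(1) unfolding N_def by auto
    thus ?thesis by simp
  qed
  show "Legendre d t = 1" unfolding Legendre_def using qr td by (simp add: cong_0_iff)
next
  assume "Legendre d t = 1"
  hence "QuadRes t d" unfolding Legendre_def by (auto split: if_splits)
  then obtain y0 where y0: "[y0^2 = d] (mod t)" unfolding QuadRes_def by blast
  obtain w where w: "padic_seq t w" "\<forall>n. [w n ^ 2 = d] (mod t^n)" using sqrt_odd[OF t td y0] by blast
  show "has_Qv_point t d (-(2*f))" by (rule pack[of t w _ _ 0]) (use w in simp_all)
qed

lemma part3:
  fixes l d d' e :: int
  assumes l: "prime l" "odd l" and dd: "d = l*d'" and ld': "\<not> l dvd d'" and le: "\<not> l dvd e"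
  shows "has_Qv_point l d (-e) \<longleftrightarrow> Legendre (-e) l = 1"
proof
  assume hp: "has_Qv_point l d (-e)"
  obtain a b where H: "\<And>N. \<exists>W Z. [l^(4*b) * W^2 = l^(2*a) * (d * l^(4*b) + -e * Z^4)] (mod l^N)"
    using unpack[OF hp] by blast
  define N where "N = 2*a+4*b+10"
  obtain W Z where WZ: "[l^(4*b) * W^2 = l^(2*a) * (d * l^(4*b) + -e * Z^4)] (mod l^N)"
    using H by blast
  have ld: "l dvd d" unfolding dd by simp
  have qr_from: "QuadRes l (-e)" if W': "[W'^2 = d*X + -e*Z'^4] (mod l)" and Z': "\<not> l dvd Z'" for W' X Z'
  proof -
    have "[d*X + -e*Z'^4 = (-e)*Z'^4] (mod l)" unfolding cong_iff_dvd_diff using ld by simp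
    hence "[W'^2 = (-e)*Z'^4] (mod l)" using W' cong_trans by blast
    thus ?thesis by (rule qr_lemma[OF l(1) Z'])
  qed
  have unit: "\<not> l dvd d*X + -e*Z'^4" if Z': "\<not> l dvd Z'" for X Z'
  proof
    assume "l dvd d*X + -e*Z'^4"
    moreover have "l dvd d*X" using ld by simp
    ultimately have "l dvd d*X - (d*X + -e*Z'^4)" by (rule dvd_diff[rotated])
    hence "l dvd e*Z'^4" by simp
    thus False using le Z' l by (simp add: prime_dvd_mult_iff prime_dvd_power_iff)
  qed
  have qr: "QuadRes l (-e)"
  proof (cases "l^b dvd Z")
    case True
    then obtain Z' where Z': "Z = l^b * Z'" by (rule dvdE)
    have h1: "[l^(2*(2*b)) * W^2 = l^(2*a+4*b) * (d + -e*Z'^4)] (mod l^N)"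
      by (rule caseA) (use WZ Z' in simp)
    show ?thesis
    proof (cases "l dvd Z'")
      case True
      then obtain Z'' where Z'': "Z' = l*Z''" by (rule dvdE)
      define X where "X = d' - l*(e*l^2*Z''^4)"
      have "d + -e*Z'^4 = l * X" unfolding X_def dd Z'' by (simp add: algebra_simps power_mult_distrib numeral_eq_Suc)
      hence h2: "[l^(2*(2*b)) * W^2 = l^(2*a+4*b+1) * X] (mod l^N)" using h1 by (simp add: ac_simps)
      have u: "\<not> l dvd X"
      proof
        assume "l dvd X"
        hence "l dvd X + l*(e*l^2*Z''^4)" by simp
        thus False using ld' unfolding X_def by simp
      qed
      have "even (2*a+4*b+1)" using key[OF l(1) u _ h2] unfolding N_def by auto
      thus ?thesis by simp
    next
      case False
      have u: "\<not> l dvd d*1 + -e*Z'^4" by (rule unit[OF False])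
      obtain W' where W': "[W'^2 = d*1 + -e*Z'^4] (mod l^(N - (2*a+4*b)))"
      proof -
        have h1': "[l^(2*(2*b)) * W^2 = l^(2*a+4*b) * (d*1 + -e*Z'^4)] (mod l^N)"
          using h1 by (simp only: mult_1_right)
        show ?thesis using key[OF l(1) u _ h1'] that unfolding N_def by auto
      qed
      have "[W'^2 = d*1 + -e*Z'^4] (mod l)" using to_modt[OF W'] unfolding N_def by simp
      thus ?thesis by (rule qr_from[OF _ False])
    qed
  next
    case False
    then obtain k Z' where k: "k < b" "Z = l^k * Z'" "\<not> l dvd Z'" using decompZ[OF l(1), of b Z] by blast
    obtain s where s: "b = k + Suc s" using less_imp_Suc_add[OF k(1)] by auto
    have h1: "[l^(2*(2*b)) * W^2 = l^(2*a+4*k) * (d * l^(4*Suc s) + -e*Z'^4)] (mod l^N)"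
      using caseB[of l b W a d "-e" k Z' N s] WZ k s by simp
    have u: "\<not> l dvd d * l^(4*Suc s) + -e*Z'^4" by (rule unit[OF k(3)])
    obtain W' where W': "[W'^2 = d * l^(4*Suc s) + -e*Z'^4] (mod l^(N - (2*a+4*k)))"
      using key[OF l(1) u _ h1] k(1) unfolding N_def by auto
    have "[W'^2 = d * l^(4*Suc s) + -e*Z'^4] (mod l)" using to_modt[OF W'] k(1) unfolding N_def by simp
    thus ?thesis by (rule qr_from[OF _ k(3)])
  qed
  show "Legendre (-e) l = 1" unfolding Legendre_def using qr le by (simp add: cong_0_iff)
next
  assume "Legendre (-e) l = 1"
  hence "QuadRes l (-e)" unfolding Legendre_def by (auto split: if_splits)
  then obtain y0 where y0: "[y0^2 = -e] (mod l)" unfolding QuadRes_def by blast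
  have ld: "l dvd d" unfolding dd by simp
  have "[-e = d + -e] (mod l)" unfolding cong_iff_dvd_diff using ld by simp
  hence y1: "[y0^2 = d + -e] (mod l)" using y0 cong_trans by blast
  have c: "\<not> l dvd d + -e"
  proof
    assume "l dvd d + -e"
    hence "l dvd d - (d + -e)" using ld dvd_diff by blast
    thus False using le by simp
  qed
  obtain w where w: "padic_seq l w" "\<forall>n. [w n ^ 2 = d + -e] (mod l^n)" using sqrt_odd[OF l c y1] by blast
  show "has_Qv_point l d (-e)" by (rule pack[of l w _ _ 1]) (use w in simp_all)
qed

lemma part1:
  fixes d f :: int
  assumes od: "odd d" and of: "odd f"
  shows "has_Qv_point 2 d (-(2*f)) \<longleftrightarrow> [d - 2*f = 1] (mod 8) \<or> [d = 1] (mod 8)"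
proof
  assume hp: "has_Qv_point 2 d (-(2*f))"
  obtain a b where H: "\<And>N. \<exists>W Z. [2^(4*b) * W^2 = 2^(2*a) * (d * 2^(4*b) + -(2*f) * Z^4)] (mod (2::int)^N)"
    using unpack[OF hp] by blast
  define N where "N = 2*a+4*b+10"
  obtain W Z where WZ: "[2^(4*b) * W^2 = 2^(2*a) * (d * 2^(4*b) + -(2*f) * Z^4)] (mod (2::int)^N)"
    using H by blast
  have p2: "prime (2::int)" by simp
  show "[d - 2*f = 1] (mod 8) \<or> [d = 1] (mod 8)"
  proof (cases "2^b dvd Z")
    case True
    then obtain Z' where Z': "Z = 2^b * Z'" by (rule dvdE)
    define u where "u = d + -(2*f)*Z'^4"
    have h1: "[2^(2*(2*b)) * W^2 = 2^(2*a+4*b) * u] (mod (2::int)^N)"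
      unfolding u_def by (rule caseA) (use WZ Z' in simp)
    have uodd: "odd u" unfolding u_def using od by simp
    hence u: "\<not> 2 dvd u" by simp
    obtain W' where W': "[W'^2 = u] (mod 2^(N - (2*a+4*b)))"
      using key[OF p2 u _ h1] unfolding N_def by auto
    have "(8::int) dvd 2^(N - (2*a+4*b))" unfolding N_def by (simp add: le_imp_power_dvd[of 3 10 "2::int", simplified])
    hence W8: "[W'^2 = u] (mod 8)" using cong_dvd_modulus[OF W'] by blast
    hence "[W'^2 = u] (mod 2)" using cong_dvd_modulus by fastforce
    hence "odd (W'^2)" using uodd cong_dvd_iff by blast
    hence "odd W'" by simp
    hence "[W'^2 = 1] (mod 8)" by (rule odd_sq8)
    hence u1: "[u = 1] (mod 8)" using W8 cong_sym cong_trans by blast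
    show ?thesis
    proof (cases "even Z'")
      case True
      then obtain z where z: "Z' = 2*z" by (rule evenE)
      have "u = d + 8 * (-(4*f*z^4))" unfolding u_def z by (simp add: power_mult_distrib)
      hence "[u = d] (mod 8)" unfolding cong_iff_dvd_diff by simp
      hence "[d = 1] (mod 8)" using u1 cong_sym cong_trans by blast
      thus ?thesis by blast
    next
      case False
      have "[Z'^4 = 1] (mod 8)" using False by (intro odd_four8) simp
      then obtain g where g: "Z'^4 - 1 = 8*g" unfolding cong_iff_dvd_diff by (rule dvdE)
      have "u = (d - 2*f) + 8 * (-(2*f*g))" unfolding u_def using g by (simp add: algebra_simps)
      hence "[u = d - 2*f] (mod 8)" unfolding cong_iff_dvd_diff by simp
      hence "[d - 2*f = 1] (mod 8)" using u1 cong_sym cong_trans by blast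
      thus ?thesis by blast
    qed
  next
    case False
    then obtain k Z' where k: "k < b" "Z = 2^k * Z'" "\<not> 2 dvd Z'" using decompZ[OF p2, of b Z] by blast
    obtain s where s: "b = k + Suc s" using less_imp_Suc_add[OF k(1)] by auto
    have h1: "[2^(2*(2*b)) * W^2 = 2^(2*a+4*k) * (d * 2^(4*Suc s) + -(2*f)*Z'^4)] (mod (2::int)^N)"
      using caseB[of 2 b W a d "-(2*f)" k Z' N s] WZ k s by simp
    hence h2: "[2^(2*(2*b)) * W^2 = 2^(2*a+4*k+1) * (2*(d*2^(4*s+2)) - f*Z'^4)] (mod (2::int)^N)"
      by (simp only: rhs_shift)
    have u: "\<not> 2 dvd (2*(d*2^(4*s+2)) - f*Z'^4)"
      by (rule not_dvd_lin[OF p2 _ k(3)]) (use of in simp)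
    have "even (2*a+4*k+1)" using key[OF p2 u _ h2] k(1) unfolding N_def by auto
    thus ?thesis by simp
  qed
next
  assume "[d - 2*f = 1] (mod 8) \<or> [d = 1] (mod 8)"
  thus "has_Qv_point 2 d (-(2*f))"
  proof
    assume "[d - 2*f = 1] (mod 8)"
    then obtain w where w: "padic_seq 2 w" "\<forall>n. [w n ^ 2 = d - 2*f] (mod 2^n)" using sqrt_two by blast
    show ?thesis by (rule pack[of 2 w _ _ 1]) (use w in simp_all)
  next
    assume "[d = 1] (mod 8)"
    then obtain w where w: "padic_seq 2 w" "\<forall>n. [w n ^ 2 = d] (mod 2^n)" using sqrt_two by blast
    show ?thesis by (rule pack[of 2 w _ _ 0]) (use w in simp_all)
  qed
qed

lemma sqf_no: "squarefree (n::int) \<Longrightarrow> prime x \<Longrightarrow> x^2 dvd n \<Longrightarrow> False"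
  unfolding squarefree_def by (meson not_prime_unit)

theorem lemma2p2:
  fixes p q r d :: int
  assumes "prime p" and "prime q" and "p \<noteq> q" and "odd p" and "odd q"
    and "r > 0"
    and "squarefree (2 * r * (p * q))"
    and "d dvd r * (p * q)"
  shows "(has_Qv_point 2 d (- (2 * r * (p * q) div d)) \<longleftrightarrow>
            [d - 2 * r * (p * q) div d = 1] (mod 8) \<or> [d = 1] (mod 8))
       \<and> (\<forall>t. prime t \<and> t dvd (r * (p * q)) div d \<longrightarrow>
            (has_Qv_point t d (- (2 * r * (p * q) div d)) \<longleftrightarrow> Legendre d t = 1))
       \<and> (\<forall>l. prime l \<and> l dvd d \<longrightarrow>
            (has_Qv_point l d (- (2 * r * (p * q) div d)) \<longleftrightarrow>
               Legendre (- (2 * r * (p * q) div d)) l = 1))"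
proof -
  obtain f where f: "r * (p * q) = d * f" using assms(8) by (rule dvdE)
  have R0: "r * (p * q) \<noteq> 0" using assms by auto
  hence d0: "d \<noteq> 0" using f by auto
  have e: "2 * r * (p * q) div d = 2 * f" using f d0 by (simp add: mult.assoc)
  have fd: "(r * (p * q)) div d = f" using f d0 by simp
  have sq: "squarefree (2 * d * f)" using assms(7) f by (simp add: mult.assoc)
  have p2: "prime (2::int)" by simp
  have od: "odd d"
  proof
    assume "even d"
    hence "2^2 dvd 2 * d * f" by (auto simp: power2_eq_square)
    thus False using sqf_no[OF sq p2] by blast
  qed
  have of: "odd f"
  proof
    assume "even f"
    hence "2^2 dvd 2 * d * f" by (auto simp: power2_eq_square)
    thus False using sqf_no[OF sq p2] by blast
  qed
  have P1: "has_Qv_point 2 d (- (2 * r * (p * q) div d)) \<longleftrightarrow>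
            [d - 2 * r * (p * q) div d = 1] (mod 8) \<or> [d = 1] (mod 8)"
    unfolding e using part1[OF od of] .
  have P2: "has_Qv_point t d (- (2 * r * (p * q) div d)) \<longleftrightarrow> Legendre d t = 1"
    if t: "prime t" "t dvd (r * (p * q)) div d" for t
  proof -
    have tf: "t dvd f" using t fd by simp
    then obtain f' where f': "f = t * f'" by (rule dvdE)
    have tf': "\<not> t dvd f'"
    proof
      assume "t dvd f'"
      hence "t^2 dvd 2 * d * f" unfolding f' by (auto simp: power2_eq_square)
      thus False using sqf_no[OF sq t(1)] by blast
    qed
    have td: "\<not> t dvd d"
    proof
      assume "t dvd d"
      hence "t^2 dvd 2 * d * f" unfolding f' by (auto simp: power2_eq_square)
      thus False using sqf_no[OF sq t(1)] by blast
    qed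
    have ot: "odd t" using tf of by (meson dvd_trans)
    show ?thesis unfolding e using part2[OF t(1) ot f' tf' td] .
  qed
  have P3: "has_Qv_point l d (- (2 * r * (p * q) div d)) \<longleftrightarrow> Legendre (- (2 * r * (p * q) div d)) l = 1"
    if l: "prime l" "l dvd d" for l
  proof -
    obtain d' where d': "d = l * d'" using l(2) by (rule dvdE)
    have ld': "\<not> l dvd d'"
    proof
      assume "l dvd d'"
      hence "l^2 dvd 2 * d * f" unfolding d' by (auto simp: power2_eq_square)
      thus False using sqf_no[OF sq l(1)] by blast
    qed
    have le: "\<not> l dvd 2 * f"
    proof
      assume "l dvd 2 * f"
      hence "l^2 dvd 2 * d * f" unfolding d' by (auto simp: power2_eq_square ac_simps)
      thus False using sqf_no[OF sq l(1)] by blast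
    qed
    have ol: "odd l" using l(2) od by (meson dvd_trans)
    show ?thesis unfolding e using part3[OF l(1) ol d' ld' le] .
  qed
  show ?thesis using P1 P2 P3 by blast
qed

end
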